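(* Let $k, r, a, b, m, n$ be integers satisfying $$k\geq 1,\quad 0\leq a\leq m,\quad n\geq km-r,\quad \max\{0,ka-r\}\leq b\leq n.$$ Let $L_{k,r}(a,b;m,n)$ be the set of lattice paths from $(a,b)$ to $(m,n)$ with unit steps $(1,0)$ and $(0,1)$ that stay weakly above the line $y=kx-r$. Then $$|L_{k,r}(a,b;m,n)|=\sum_{i=0}^{\lfloor\frac{b+r-ka}{k+1}\rfloor}(-1)^i\,\frac{n+r+1-km}{n+r+1-k(a+i)}\binom{m+n+r-(k+1)(a+i)}{m-a-i}\binom{b+r-k(a+i)}{i}.$$
   Context: Lattice paths use unit steps $(1,0)$ and $(0,1)$. A path stays weakly above the line $y=qx-r$ if every lattice point $(x,y)$ on it satisfies $y\geq qx-r$. $\lfloor x\rfloor$ is the largest integer not exceeding $x$. Binomial coefficients $\binom{N}{j}$ with $N\ge 0$ are the usual ones and equal $0$ when $j<0$ or $j>N$. *)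

theory Defs
  imports Complex_Main
begin

text \<open>A lattice path is represented by the list of lattice points it visits, in order.
  Consecutive points differ by a unit step (1,0) or (0,1).\<close>
definition lattice_paths :: "int \<times> int \<Rightarrow> int \<times> int \<Rightarrow> (int \<times> int) list set" where
  "lattice_paths P Q = {ps. ps \<noteq> [] \<and> hd ps = P \<and> last ps = Q \<and>
     (\<forall>i. Suc i < length ps \<longrightarrow>
        ps ! Suc i = (fst (ps ! i) + 1, snd (ps ! i)) \<or>
        ps ! Suc i = (fst (ps ! i), snd (ps ! i) + 1))}"

definition L :: "int \<Rightarrow> int \<Rightarrow> int \<Rightarrow> int \<Rightarrow> int \<Rightarrow> int \<Rightarrow> (int \<times> int) list set" where
  "L q r a b m n = {ps \<in> lattice_paths (a, b) (m, n). \<forall>(x, y) \<in> set ps. y \<ge> q * x - r}"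

definition ibinom :: "int \<Rightarrow> int \<Rightarrow> int" where
  "ibinom N j = (if j < 0 \<or> j > N then 0 else int (nat N choose nat j))"

end

theory Submission
  imports Defs
begin



definition stp :: "int \<times> int \<Rightarrow> int \<times> int \<Rightarrow> bool" where
  "stp p q \<longleftrightarrow> q = (fst p + 1, snd p) \<or> q = (fst p, snd p + 1)"

fun ok :: "(int \<times> int) list \<Rightarrow> bool" where
  "ok (p # q # rest) = (stp p q \<and> ok (q # rest))"
| "ok _ = True"

lemma ok_iff:
  "(\<forall>i. Suc i < length ps \<longrightarrow> ps ! Suc i = (fst (ps ! i) + 1, snd (ps ! i)) \<or>
        ps ! Suc i = (fst (ps ! i), snd (ps ! i) + 1)) \<longleftrightarrow> ok ps"
proof (induction ps rule: ok.induct)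
  case (1 p q rest)
  let ?P = "\<lambda>ps i. Suc i < length ps \<longrightarrow> ps ! Suc i = (fst (ps ! i) + 1, snd (ps ! i)) \<or>
        ps ! Suc i = (fst (ps ! i), snd (ps ! i) + 1)"
  have "(\<forall>i. ?P (p # q # rest) i) \<longleftrightarrow> ?P (p # q # rest) 0 \<and> (\<forall>i. ?P (p # q # rest) (Suc i))"
    by (metis not0_implies_Suc)
  also have "(\<forall>i. ?P (p # q # rest) (Suc i)) \<longleftrightarrow> (\<forall>i. ?P (q # rest) i)"
    by simp
  finally show ?case using 1 by (simp add: stp_def)
qed auto

lemma ok_snoc: "ok (xs @ [y]) \<longleftrightarrow> ok xs \<and> (xs \<noteq> [] \<longrightarrow> stp (last xs) y)"
  by (induction xs rule: ok.induct) auto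

lemma ok_mono: "ok ps \<Longrightarrow> ps \<noteq> [] \<Longrightarrow> fst (hd ps) \<le> fst (last ps) \<and> snd (hd ps) \<le> snd (last ps)
   \<and> fst (hd ps) + snd (hd ps) + int (length ps) = fst (last ps) + snd (last ps) + 1"
  by (induction ps rule: ok.induct) (auto simp: stp_def)

lemma L_alt: "L q r a b m n = {ps. ps \<noteq> [] \<and> hd ps = (a, b) \<and> last ps = (m, n) \<and> ok ps \<and>
    (\<forall>(x, y) \<in> set ps. y \<ge> q * x - r)}"
  unfolding L_def lattice_paths_def ok_iff by auto

lemma L_below: "b < q * a - r \<Longrightarrow> L q r a b m n = {}"
proof -
  assume h: "b < q * a - r"
  { fix ps assume "ps \<in> L q r a b m n"
    hence "ps \<noteq> []" "hd ps = (a,b)" "\<forall>(x, y) \<in> set ps. y \<ge> q * x - r" unfolding L_alt by auto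
    hence False using h hd_in_set[of ps] by fastforce }
  thus ?thesis by blast
qed

lemma L_end_below: "n < q * m - r \<Longrightarrow> L q r a b m n = {}"
proof -
  assume h: "n < q * m - r"
  { fix ps assume "ps \<in> L q r a b m n"
    hence "ps \<noteq> []" "last ps = (m,n)" "\<forall>(x, y) \<in> set ps. y \<ge> q * x - r" unfolding L_alt by auto
    hence False using h last_in_set[of ps] by fastforce }
  thus ?thesis by blast
qed

lemma L_order: "m < a \<or> n < b \<Longrightarrow> L q r a b m n = {}"
  unfolding L_alt using ok_mono by fastforce

lemma L_base: "b \<ge> q * a - r \<Longrightarrow> L q r a b a b = {[(a, b)]}"
proof -
  assume h: "b \<ge> q * a - r"
  have "ps = [(a,b)]" if "ps \<in> L q r a b a b" for ps
  proof -
    from that have "ps \<noteq> []" "hd ps = (a,b)" "last ps = (a,b)" "ok ps" unfolding L_alt by auto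
    with ok_mono[of ps] have "length ps = 1" by auto
    then show ?thesis using \<open>hd ps = (a,b)\<close> by (cases ps) auto
  qed
  moreover have "[(a,b)] \<in> L q r a b a b" using h unfolding L_alt by auto
  ultimately show ?thesis by blast
qed

lemma L_cons:
  assumes "(a, b) \<noteq> (m, n)" "b \<ge> q * a - r"
  shows "L q r a b m n = Cons (a, b) ` (L q r (a + 1) b m n \<union> L q r a (b + 1) m n)"
proof
  show "L q r a b m n \<subseteq> Cons (a, b) ` (L q r (a + 1) b m n \<union> L q r a (b + 1) m n)"
  proof
    fix ps assume "ps \<in> L q r a b m n"
    hence ps: "ps \<noteq> []" "hd ps = (a, b)" "last ps = (m, n)" "ok ps"
      "\<forall>(x, y) \<in> set ps. y \<ge> q * x - r" unfolding L_alt by auto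
    then obtain rest where e: "ps = (a,b) # rest" by (cases ps) auto
    with ps assms(1) have "rest \<noteq> []" by auto
    then obtain p rest' where e2: "rest = p # rest'" by (cases rest) auto
    from ps e e2 have "stp (a,b) p" "ok rest" by auto
    moreover have "last rest = (m,n)" "\<forall>(x, y) \<in> set rest. y \<ge> q * x - r"
      using ps e e2 by auto
    ultimately have "rest \<in> L q r (a + 1) b m n \<union> L q r a (b + 1) m n"
      unfolding L_alt stp_def using e2 by auto
    thus "ps \<in> Cons (a, b) ` (L q r (a + 1) b m n \<union> L q r a (b + 1) m n)" using e by auto
  qed
next
  show "Cons (a, b) ` (L q r (a + 1) b m n \<union> L q r a (b + 1) m n) \<subseteq> L q r a b m n"
  proof
    fix ps assume "ps \<in> Cons (a, b) ` (L q r (a + 1) b m n \<union> L q r a (b + 1) m n)"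
    then obtain rest where e: "ps = (a,b) # rest" and
      "rest \<in> L q r (a + 1) b m n \<union> L q r a (b + 1) m n" by auto
    then have "rest \<noteq> []" "last rest = (m,n)" "ok rest" "\<forall>(x, y) \<in> set rest. y \<ge> q * x - r"
      "stp (a,b) (hd rest)"
      unfolding L_alt stp_def by auto
    then show "ps \<in> L q r a b m n" unfolding L_alt e using assms(2)
      by (cases rest) auto
  qed
qed

lemma L_snoc:
  assumes "(a, b) \<noteq> (m, n)" "n \<ge> q * m - r"
  shows "L q r a b m n = (\<lambda>p. p @ [(m, n)]) ` (L q r a b (m - 1) n \<union> L q r a b m (n - 1))"
proof
  show "L q r a b m n \<subseteq> (\<lambda>p. p @ [(m, n)]) ` (L q r a b (m - 1) n \<union> L q r a b m (n - 1))"
  proof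
    fix ps assume "ps \<in> L q r a b m n"
    hence ps: "ps \<noteq> []" "hd ps = (a, b)" "last ps = (m, n)" "ok ps"
      "\<forall>(x, y) \<in> set ps. y \<ge> q * x - r" unfolding L_alt by auto
    define rest where "rest = butlast ps"
    have e: "ps = rest @ [(m,n)]" using ps unfolding rest_def by (metis append_butlast_last_id)
    have "rest \<noteq> []" using e ps assms(1) by auto
    have "ok rest" "stp (last rest) (m,n)" using ps(4) e \<open>rest \<noteq> []\<close> ok_snoc by auto
    moreover have "hd rest = (a,b)" using e ps \<open>rest \<noteq> []\<close> by (simp add: hd_append)
    moreover have "\<forall>(x, y) \<in> set rest. y \<ge> q * x - r" using ps e by auto
    moreover have "last rest = (m - 1, n) \<or> last rest = (m, n - 1)"
      using \<open>stp (last rest) (m,n)\<close> unfolding stp_def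
      by (cases "last rest") auto
    ultimately have "rest \<in> L q r a b (m - 1) n \<union> L q r a b m (n - 1)"
      unfolding L_alt using \<open>rest \<noteq> []\<close> by auto
    thus "ps \<in> (\<lambda>p. p @ [(m, n)]) ` (L q r a b (m - 1) n \<union> L q r a b m (n - 1))" using e by auto
  qed
next
  show "(\<lambda>p. p @ [(m, n)]) ` (L q r a b (m - 1) n \<union> L q r a b m (n - 1)) \<subseteq> L q r a b m n"
  proof
    fix ps assume "ps \<in> (\<lambda>p. p @ [(m, n)]) ` (L q r a b (m - 1) n \<union> L q r a b m (n - 1))"
    then obtain rest where e: "ps = rest @ [(m,n)]" and
      "rest \<in> L q r a b (m - 1) n \<union> L q r a b m (n - 1)" by auto
    then have "rest \<noteq> []" "hd rest = (a,b)" "ok rest" "\<forall>(x, y) \<in> set rest. y \<ge> q * x - r"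
      "stp (last rest) (m,n)"
      unfolding L_alt stp_def by auto
    then show "ps \<in> L q r a b m n" unfolding L_alt e using assms(2) ok_snoc
      by (auto simp: hd_append)
  qed
qed

lemma L_finite: "finite (L q r a b m n)"
proof (induction "nat (m + n - a - b)" arbitrary: a b rule: less_induct)
  case less
  show ?case
  proof (cases "b < q * a - r \<or> m < a \<or> n < b")
    case True
    then show ?thesis
    proof
      assume "b < q * a - r" thus ?thesis by (simp add: L_below)
    next
      assume "m < a \<or> n < b"
      thus ?thesis by (simp add: L_order)
    qed
  next
    case False
    show ?thesis
    proof (cases "(a,b) = (m,n)")
      case True thus ?thesis using False L_base by auto
    next
      case ne: False
      have "finite (L q r (a + 1) b m n)" "finite (L q r a (b + 1) m n)"
        using less False ne by (auto intro!: less)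
      thus ?thesis using L_cons[OF ne] False by auto
    qed
  qed
qed

lemma card_cons:
  assumes "(a, b) \<noteq> (m, n)" "b \<ge> q * a - r"
  shows "card (L q r a b m n) = card (L q r (a + 1) b m n) + card (L q r a (b + 1) m n)"
proof -
  have d: "L q r (a + 1) b m n \<inter> L q r a (b + 1) m n = {}" unfolding L_alt by auto
  show ?thesis
    unfolding L_cons[OF assms]
    by (subst card_image) (auto simp: L_finite d card_Un_disjoint)
qed

lemma card_snoc:
  assumes "(a, b) \<noteq> (m, n)" "n \<ge> q * m - r"
  shows "card (L q r a b m n) = card (L q r a b (m - 1) n) + card (L q r a b m (n - 1))"
proof -
  have d: "L q r a b (m - 1) n \<inter> L q r a b m (n - 1) = {}" unfolding L_alt by auto
  have i: "inj_on (\<lambda>p. p @ [(m, n)]) X" for X by (rule inj_onI) auto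
  show ?thesis
    unfolding L_snoc[OF assms]
    by (subst card_image[OF i]) (auto simp: L_finite d card_Un_disjoint)
qed




lemma ib_nonneg: "0 \<le> N \<Longrightarrow> 0 \<le> j \<Longrightarrow> ibinom N j = int (nat N choose nat j)"
  by (auto simp: ibinom_def binomial_eq_0 nat_less_eq_zless)

lemma ib_neg: "j < 0 \<or> j > N \<Longrightarrow> ibinom N j = 0"
  by (auto simp: ibinom_def)

lemma ib_pascal:
  assumes "N \<noteq> 0 \<or> j \<noteq> 0"
  shows "ibinom N j = ibinom (N - 1) j + ibinom (N - 1) (j - 1)"
proof (cases "j < 0 \<or> j > N")
  case True thus ?thesis by (auto simp: ib_neg)
next
  case False
  hence j: "0 \<le> j" "j \<le> N" by auto
  show ?thesis
  proof (cases "j = 0")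
    case True
    with assms j have "N \<ge> 1" by auto
    with True show ?thesis by (simp add: ib_nonneg ib_neg)
  next
    case False
    define n' j' where "n' = nat (N - 1)" and "j' = nat (j - 1)"
    have e: "N = int n' + 1" "j = int j' + 1" "j' \<le> n'" using j False unfolding n'_def j'_def by auto
    have n1: "nat N = Suc n'" "nat j = Suc j'" "nat (N - 1) = n'" "nat (j - 1) = j'" using e by auto
    have "ibinom N j = int (nat N choose nat j)" using j by (simp add: ib_nonneg)
    also have "\<dots> = int (Suc n' choose Suc j')" unfolding n1 ..
    also have "\<dots> = int (n' choose Suc j') + int (n' choose j')" by simp
    also have "\<dots> = int (nat (N - 1) choose nat j) + int (nat (N - 1) choose nat (j - 1))"
      unfolding n1 ..
    also have "\<dots> = ibinom (N - 1) j + ibinom (N - 1) (j - 1)"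
      using e by (simp add: ib_nonneg)
    finally show ?thesis .
  qed
qed

lemma ib_absorb:
  assumes "0 \<le> s"
  shows "(s + 1) * ibinom (s + t) (t - 1) = t * ibinom (s + t) t"
proof (cases "t \<le> 0")
  case True thus ?thesis by (cases "t = 0") (auto simp: ib_neg)
next
  case False
  define j' s' where "j' = nat (t - 1)" and "s' = nat s"
  have tj: "t = int j' + 1" using False unfolding j'_def by auto
  have ss: "s = int s'" using assms unfolding s'_def by auto
  have n1: "nat (s + t) = j' + s' + 1" "nat t = j' + 1" "nat (t - 1) = j'" using tj ss by auto
  have l: "ibinom (s + t) (t - 1) = int ((j' + s' + 1) choose j')"
    using tj ss ib_nonneg[of "s+t" "t-1"] unfolding n1 by simp
  have r: "ibinom (s + t) t = int ((j' + s' + 1) choose (j' + 1))"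
    using tj ss ib_nonneg[of "s+t" "t"] unfolding n1 by simp
  have "(s' + 1) * ((j' + s' + 1) choose j') = (j' + s' + 1) * ((j' + s') choose j')"
    using binomial_absorb_comp[of "j' + s' + 1" j'] by (simp add: add.commute add.left_commute)
  also have "\<dots> = ((j' + s' + 1) choose (j' + 1)) * (j' + 1)"
    using Suc_times_binomial_eq[of "j' + s'" j'] by simp
  finally have "int ((s' + 1) * ((j' + s' + 1) choose j')) = int (((j' + s' + 1) choose (j' + 1)) * (j' + 1))"
    by simp
  thus ?thesis unfolding l r using tj ss by (simp add: algebra_simps)
qed

definition Bal :: "int \<Rightarrow> int \<Rightarrow> int \<Rightarrow> int \<Rightarrow> int \<Rightarrow> int" where
  "Bal k r x m n = ibinom (m + n + r - (k + 1) * x) (m - x) - k * ibinom (m + n + r - (k + 1) * x) (m - x - 1)"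

lemma Bal_zero:
  assumes "t \<ge> 1" "s + 1 = k * t" "0 \<le> s"
  shows "ibinom (s + t) t - k * ibinom (s + t) (t - 1) = 0"
proof -
  from assms(3) have "(s + 1) * ibinom (s + t) (t - 1) = t * ibinom (s + t) t" by (rule ib_absorb)
  hence "(k * t) * ibinom (s + t) (t - 1) = t * ibinom (s + t) t" by (metis assms(2))
  hence "t * (k * ibinom (s + t) (t - 1)) = t * ibinom (s + t) t" by (simp add: ac_simps)
  hence "k * ibinom (s + t) (t - 1) = ibinom (s + t) t" using assms(1) by simp
  thus ?thesis by simp
qed

lemma Bal_pascal:
  assumes "m + n + r - (k + 1) * x \<noteq> 0"
  shows "Bal k r x m n = Bal k r x (m - 1) n + Bal k r x m (n - 1)"
proof -
  define N where "N = m + n + r - (k + 1) * x"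
  have N1: "m - 1 + n + r - (k + 1) * x = N - 1" "m + (n - 1) + r - (k + 1) * x = N - 1"
    unfolding N_def by simp_all
  have p1: "ibinom N (m - x) = ibinom (N - 1) (m - x) + ibinom (N - 1) (m - x - 1)"
    using assms ib_pascal N_def by auto
  have p2: "ibinom N (m - x - 1) = ibinom (N - 1) (m - x - 1) + ibinom (N - 1) (m - x - 1 - 1)"
    using assms ib_pascal N_def by auto
  show ?thesis unfolding Bal_def N1 N_def[symmetric] p1 p2
    by (simp add: algebra_simps)
qed




lemma ballot:
  fixes k r x m n :: int
  assumes k: "k \<ge> 1" and "n \<ge> k * m - r"
  shows "int (card (L k r x (k * x - r) m n)) = Bal k r x m n"
  using assms(2)
proof (induction "nat (m - x + n - (k * x - r))" arbitrary: m n rule: less_induct)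
  case less
  show ?case
  proof (cases "m < x")
    case True
    then show ?thesis by (simp add: L_order Bal_def ib_neg)
  next
    case False
    have "k * x \<le> k * m" using False k by (simp add: mult_left_mono)
    hence ny: "n \<ge> k * x - r" using less.prems by linarith
    show ?thesis
    proof (cases "(x, k * x - r) = (m, n)")
      case True
      then have e: "m = x" "n = k * x - r" by auto
      have "x + (k * x - r) + r - (k + 1) * x = 0" by (simp add: algebra_simps)
      then show ?thesis using L_base[where q=k and r=r and a=x and b="k * x - r"] e by (simp add: Bal_def ib_neg ib_nonneg)
    next
      case ne: False
      have "m \<noteq> x \<or> n \<noteq> k * x - r" using ne by auto
      hence M: "m - x + n - (k * x - r) \<ge> 1" using False ny by linarith
      have cs: "card (L k r x (k * x - r) m n) = card (L k r x (k * x - r) (m - 1) n)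
          + card (L k r x (k * x - r) m (n - 1))"
        by (rule card_snoc[OF ne less.prems])
      have h1: "int (card (L k r x (k * x - r) (m - 1) n)) = Bal k r x (m - 1) n"
      proof (cases "m - 1 < x")
        case True
        then show ?thesis by (simp add: L_order Bal_def ib_neg)
      next
        case False
        have "k * (m - 1) \<le> k * m" using k by simp
        hence "n \<ge> k * (m - 1) - r" using less.prems by linarith
        moreover have "nat (m - 1 - x + n - (k * x - r)) < nat (m - x + n - (k * x - r))"
          using M by linarith
        ultimately show ?thesis using less.hyps by blast
      qed
      have h2: "int (card (L k r x (k * x - r) m (n - 1))) = Bal k r x m (n - 1)"
      proof (cases "n - 1 < k * m - r")
        case True
        then have c0: "card (L k r x (k * x - r) m (n - 1)) = 0" by (simp add: L_end_below)
        have en: "n = k * m - r" using True less.prems by linarith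
        have t1: "m - x \<ge> 1" using ne en False by auto
        have "k * (m - x) \<ge> 1" using t1 k by (metis mult_le_cancel_left1 mult_less_cancel_left1 not_le order_trans zero_less_one_class.zero_le_one)
        hence s0: "0 \<le> n - 1 + r - k * x" using en by (simp add: algebra_simps)
        have z: "ibinom ((n - 1 + r - k * x) + (m - x)) (m - x) - k * ibinom ((n - 1 + r - k * x) + (m - x)) (m - x - 1) = 0"
          by (rule Bal_zero[OF t1 _ s0]) (simp add: en algebra_simps)
        have e2: "(n - 1 + r - k * x) + (m - x) = m + (n - 1) + r - (k + 1) * x" by (simp add: algebra_simps)
        have "Bal k r x m (n - 1) = 0" using z unfolding Bal_def e2[symmetric] .
        then show ?thesis using c0 by simp
      next
        case False
        moreover have "nat (m - x + (n - 1) - (k * x - r)) < nat (m - x + n - (k * x - r))"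
          using M by linarith
        ultimately show ?thesis using less.hyps by (metis not_le)
      qed
      have "m + n + r - (k + 1) * x \<noteq> 0" using M by (simp add: algebra_simps)
      then have Bp: "Bal k r x m n = Bal k r x (m - 1) n + Bal k r x m (n - 1)" by (rule Bal_pascal)
      show ?thesis using cs h1 h2 Bp by simp
    qed
  qed
qed




lemma part2:
  fixes k r m n a b :: int
  assumes k: "k \<ge> 1" and "k * a - r \<le> b" "b \<le> n"
  shows "\<forall>M. nat (b + r - k * a) < M \<longrightarrow> int (card (L k r a b m n)) =
    (\<Sum>i<M. (-1) ^ i * ibinom (b + r - k * a - k * int i) (int i)
        * int (card (L k r (a + int i) (k * (a + int i) - r) m n)))"
  using assms(2,3)
proof (induction "nat (b + r - k * a)" arbitrary: a b rule: less_induct)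
  case less
  define D where "D x = int (card (L k r x (k * x - r) m n))" for x
  show ?case
  proof (intro allI impI)
    fix M assume MM: "nat (b + r - k * a) < M"
    then obtain M' where M': "M = Suc M'" by (cases M) auto
    show "int (card (L k r a b m n)) =
      (\<Sum>i<M. (-1) ^ i * ibinom (b + r - k * a - k * int i) (int i)
          * int (card (L k r (a + int i) (k * (a + int i) - r) m n)))"
    proof (cases "b + r - k * a = 0")
      case True
      hence eb: "b = k * a - r" by simp
      have z: "ibinom (b + r - k * a - k * int (Suc j)) (int (Suc j)) = 0" for j
      proof -
        have "k * int (Suc j) \<ge> 0" using k by simp
        thus ?thesis using True by (intro ib_neg) simp
      qed
      show ?thesis unfolding M' sum.lessThan_Suc_shift using z True eb
        by (simp add: ib_nonneg)
    next
      case False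
      hence b1: "b + r - k * a \<ge> 1" using less.prems by simp
      have ne: "(a, b - 1) \<noteq> (m, n)" using less.prems by auto
      have cc: "card (L k r a (b - 1) m n) = card (L k r (a + 1) (b - 1) m n) + card (L k r a b m n)"
        using card_cons[OF ne] b1 by simp
      have IH1: "int (card (L k r a (b - 1) m n)) =
        (\<Sum>i<M. (-1) ^ i * ibinom (b - 1 + r - k * a - k * int i) (int i) * D (a + int i))"
      proof -
        have lt: "nat (b - 1 + r - k * a) < nat (b + r - k * a)" using b1 by linarith
        have "k * a - r \<le> b - 1" "b - 1 \<le> n" using b1 less.prems by auto
        from less.hyps[OF lt this] have "\<forall>M. nat (b - 1 + r - k * a) < M \<longrightarrow> int (card (L k r a (b - 1) m n)) =
    (\<Sum>i<M. (-1) ^ i * ibinom (b - 1 + r - k * a - k * int i) (int i)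
        * int (card (L k r (a + int i) (k * (a + int i) - r) m n)))" .
        moreover have "nat (b - 1 + r - k * a) < M" using lt MM by linarith
        ultimately show ?thesis unfolding D_def by blast
      qed
      have S2: "(\<Sum>i<M. (-1) ^ i * ibinom (b + r - k * a - 1 - k * int i) (int i - 1) * D (a + int i))
          = - int (card (L k r (a + 1) (b - 1) m n))"
      proof (cases "b - 1 \<ge> k * (a + 1) - r")
        case True
        have IH2: "int (card (L k r (a + 1) (b - 1) m n)) =
          (\<Sum>j<M'. (-1) ^ j * ibinom (b - 1 + r - k * (a + 1) - k * int j) (int j) * D (a + 1 + int j))"
          using less.hyps[of "b - 1" "a + 1"] less.prems True MM M' k unfolding D_def
          by (auto simp: algebra_simps)
        show ?thesis unfolding M' sum.lessThan_Suc_shift IH2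
          by (simp add: ib_neg sum_negf[symmetric] algebra_simps)
      next
        case False
        have zz: "(-1) ^ i * ibinom (b + r - k * a - 1 - k * int i) (int i - 1) * D (a + int i) = 0" for i
        proof (cases i)
          case 0 thus ?thesis by (simp add: ib_neg)
        next
          case (Suc j)
          have "k * int i \<ge> k" using k Suc by simp
          hence "b + r - k * a - 1 - k * int i < int i - 1" using False Suc by (simp add: algebra_simps)
          thus ?thesis by (simp add: ib_neg)
        qed
        have "card (L k r (a + 1) (b - 1) m n) = 0" using False by (simp add: L_below)
        moreover have "(\<Sum>i<M. (-1) ^ i * ibinom (b + r - k * a - 1 - k * int i) (int i - 1) * D (a + int i)) = 0"
          using zz by (intro sum.neutral) blast
        ultimately show ?thesis by simp
      qed
      have P: "ibinom (b + r - k * a - k * int i) (int i) =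
          ibinom (b - 1 + r - k * a - k * int i) (int i) + ibinom (b + r - k * a - 1 - k * int i) (int i - 1)" for i
      proof -
        have "b + r - k * a - k * int i \<noteq> 0 \<or> int i \<noteq> 0" using b1 by (cases "i = 0") auto
        from ib_pascal[OF this] show ?thesis by (simp add: algebra_simps)
      qed
      have "(\<Sum>i<M. (-1) ^ i * ibinom (b + r - k * a - k * int i) (int i) * D (a + int i))
         = (\<Sum>i<M. (-1) ^ i * ibinom (b - 1 + r - k * a - k * int i) (int i) * D (a + int i))
          + (\<Sum>i<M. (-1) ^ i * ibinom (b + r - k * a - 1 - k * int i) (int i - 1) * D (a + int i))"
        unfolding P by (simp add: algebra_simps sum.distrib)
      also have "\<dots> = int (card (L k r a b m n))" unfolding IH1[symmetric] S2 using cc by simp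
      finally show ?thesis unfolding D_def by simp
    qed
  qed
qed




lemma term_eq:
  fixes s t k :: int
  assumes "0 \<le> s"
  shows "real_of_int (s + 1 - k * t) / real_of_int (s + 1) * real_of_int (ibinom (s + t) t)
     = real_of_int (ibinom (s + t) t - k * ibinom (s + t) (t - 1))"
proof -
  have h: "real_of_int (s + 1) * real_of_int (ibinom (s + t) (t - 1)) = real_of_int t * real_of_int (ibinom (s + t) t)"
    using ib_absorb[OF assms, of t] by (metis of_int_mult)
  have p: "real_of_int (s + 1) > 0" using assms by simp
  show ?thesis using h p by (simp add: field_simps)
qed

theorem theorem2p1:
  fixes k r a b m n :: int
  assumes "k \<ge> 1" and "0 \<le> a" and "a \<le> m" and "n \<ge> k * m - r"
    and "max 0 (k * a - r) \<le> b" and "b \<le> n"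
  shows "real (card (L k r a b m n)) =
    (\<Sum>i\<in>{0..\<lfloor>real_of_int (b + r - k * a) / real_of_int (k + 1)\<rfloor>}.
       (-1) ^ nat i * (real_of_int (n + r + 1 - k * m) / real_of_int (n + r + 1 - k * (a + i)))
       * real_of_int (ibinom (m + n + r - (k + 1) * (a + i)) (m - a - i))
       * real_of_int (ibinom (b + r - k * (a + i)) i))"
proof -
  define B where "B = b + r - k * a"
  have B0: "0 \<le> B" using assms(5) unfolding B_def by simp
  define U where "U = B div (k + 1)"
  have fl: "\<lfloor>real_of_int (b + r - k * a) / real_of_int (k + 1)\<rfloor> = U"
    unfolding U_def B_def by (rule floor_divide_of_int_eq)
  have U0: "0 \<le> U" using B0 assms(1) unfolding U_def by (simp add: pos_imp_zdiv_nonneg_iff)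
  have dm: "(k + 1) * U + B mod (k + 1) = B" unfolding U_def by (rule mult_div_mod_eq)
  have m0: "0 \<le> B mod (k + 1)" using assms(1) by (simp add: pos_mod_sign)
  have kp: "0 < k + 1" using assms(1) by simp
  have m1: "B mod (k + 1) < k + 1" using kp by (rule pos_mod_bound)
  have Ule: "(k + 1) * U \<le> B" using dm m0 by linarith
  have Ugt: "B < (k + 1) * (U + 1)" using dm m1 by (simp add: algebra_simps)
  define T where "T i = (-1) ^ i * ibinom (B - k * int i) (int i)
        * int (card (L k r (a + int i) (k * (a + int i) - r) m n))" for i
  have P2: "int (card (L k r a b m n)) = (\<Sum>i<Suc (nat B). T i)"
  proof -
    have "k * a - r \<le> b" using assms(5) by simp
    from part2[OF assms(1) this assms(6)] have "nat B < Suc (nat B) \<longrightarrow> int (card (L k r a b m n)) = (\<Sum>i<Suc (nat B). (-1) ^ i * ibinom (b + r - k * a - k * int i) (int i)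
        * int (card (L k r (a + int i) (k * (a + int i) - r) m n)))" unfolding B_def by blast
    thus ?thesis unfolding T_def B_def by simp
  qed
  have vanish: "T i = 0" if "i \<in> {..<Suc (nat B)} - {..<Suc (nat U)}" for i
  proof -
    from that have "int i \<ge> U + 1" using U0 by auto
    hence "(k + 1) * (U + 1) \<le> (k + 1) * int i" using assms(1) by (intro mult_left_mono) auto
    hence "B - k * int i < int i" using Ugt by (simp add: algebra_simps)
    thus ?thesis unfolding T_def by (simp add: ib_neg)
  qed
  have sub: "{..<Suc (nat U)} \<subseteq> {..<Suc (nat B)}"
  proof -
    have "0 \<le> k * U" using U0 assms(1) by simp
    hence "U \<le> B" using Ule by (simp add: algebra_simps)
    thus ?thesis using U0 by auto
  qed
  have P3: "(\<Sum>i<Suc (nat B). T i) = (\<Sum>i<Suc (nat U). T i)"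
    by (rule sum.mono_neutral_right) (use vanish sub in auto)
  have idx: "{0..U} = int ` {..<Suc (nat U)}"
  proof
    show "{0..U} \<subseteq> int ` {..<Suc (nat U)}"
    proof
      fix x assume "x \<in> {0..U}"
      hence "x = int (nat x)" "nat x < Suc (nat U)" by auto
      thus "x \<in> int ` {..<Suc (nat U)}" by blast
    qed
  qed (use U0 in auto)
  have termw: "real_of_int (T i) =
      (-1) ^ nat (int i) * (real_of_int (n + r + 1 - k * m) / real_of_int (n + r + 1 - k * (a + int i)))
       * real_of_int (ibinom (m + n + r - (k + 1) * (a + int i)) (m - a - int i))
       * real_of_int (ibinom (b + r - k * (a + int i)) (int i))" if "i \<in> {..<Suc (nat U)}" for i
  proof -
    have iU: "int i \<le> U" using that U0 by auto
    hence "(k + 1) * int i \<le> (k + 1) * U" using assms(1) by (intro mult_left_mono) auto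
    hence Bi: "(k + 1) * int i \<le> B" using Ule by simp
    define s where "s = n + r - k * (a + int i)"
    define t where "t = m - (a + int i)"
    have s0: "0 \<le> s" using Bi assms(6) unfolding s_def B_def by (simp add: algebra_simps)
    have e1: "m + n + r - (k + 1) * (a + int i) = s + t" unfolding s_def t_def by (simp add: algebra_simps)
    have e2: "m - a - int i = t" unfolding t_def by simp
    have e3: "n + r + 1 - k * m = s + 1 - k * t" unfolding s_def t_def by (simp add: algebra_simps)
    have e4: "n + r + 1 - k * (a + int i) = s + 1" unfolding s_def by simp
    have e5: "b + r - k * (a + int i) = B - k * int i" unfolding B_def by (simp add: algebra_simps)
    have bal: "int (card (L k r (a + int i) (k * (a + int i) - r) m n)) = ibinom (s + t) t - k * ibinom (s + t) (t - 1)"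
      using ballot[OF assms(1) assms(4), of "a + int i"] unfolding Bal_def e1 t_def by simp
    have te: "real_of_int (s + 1 - k * t) / real_of_int (s + 1) * real_of_int (ibinom (s + t) t)
     = real_of_int (ibinom (s + t) t - k * ibinom (s + t) (t - 1))" by (rule term_eq[OF s0])
    have "(-1) ^ nat (int i) * (real_of_int (s + 1 - k * t) / real_of_int (s + 1))
       * real_of_int (ibinom (s + t) t) * real_of_int (ibinom (B - k * int i) (int i))
      = (-1) ^ i * (real_of_int (s + 1 - k * t) / real_of_int (s + 1) * real_of_int (ibinom (s + t) t))
        * real_of_int (ibinom (B - k * int i) (int i))"
      by (simp only: nat_int mult.assoc)
    also have "\<dots> = real_of_int (T i)" unfolding te T_def bal by simp
    finally show ?thesis unfolding e1 e2 e3 e4 e5 by simp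
  qed
  have "real (card (L k r a b m n)) = real_of_int (\<Sum>i<Suc (nat U). T i)"
    using P2 P3 by (metis of_int_of_nat_eq)
  also have "\<dots> = (\<Sum>i<Suc (nat U). real_of_int (T i))" by simp
  also have "\<dots> = (\<Sum>i\<in>{0..U}.
       (-1) ^ nat i * (real_of_int (n + r + 1 - k * m) / real_of_int (n + r + 1 - k * (a + i)))
       * real_of_int (ibinom (m + n + r - (k + 1) * (a + i)) (m - a - i))
       * real_of_int (ibinom (b + r - k * (a + i)) i))"
    unfolding idx by (subst sum.reindex) (auto simp: termw)
  finally show ?thesis unfolding fl .
qed


end
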